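(* Let $X$ be a non-empty set and let $\mathcal{U}\subseteq P(X)$ be anti-closed under arbitrary unions. Then $\mathcal{U}$ is anti-closed under finite intersections.
   Context: For a family $\mathcal{U}\subseteq P(X)$: $\mathcal{U}$ is anti-closed under finite intersections if for every $n\in\mathbb{N}$ and all $A_1,\dots,A_n\in\mathcal{U}$ that are not all equal, $\bigcap_{i=1}^n A_i\notin\mathcal{U}$; $\mathcal{U}$ is anti-closed under arbitrary intersections if for every non-empty index set $J$ and all $A_i\in\mathcal{U}$ ($i\in J$) not all equal, $\bigcap_{i\in J}A_i\notin\mathcal{U}$; $\mathcal{U}$ is anti-closed under arbitrary unions if for every non-empty index set $J$ and all $A_i\in\mathcal{U}$ ($i\in J$) not all equal, $\bigcup_{i\in J}A_i\notin\mathcal{U}$. *)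

theory Defs
  imports Main
begin

definition anti_closed_fin_inter :: "'a set set \<Rightarrow> bool" where
  "anti_closed_fin_inter U \<longleftrightarrow>
     (\<forall>(n::nat) (A :: nat \<Rightarrow> 'a set).
        (\<forall>i\<in>{1..n}. A i \<in> U) \<and> (\<exists>i\<in>{1..n}. \<exists>j\<in>{1..n}. A i \<noteq> A j)
        \<longrightarrow> (\<Inter>i\<in>{1..n}. A i) \<notin> U)"

text \<open>An indexed family
  (A_i), i in J, is represented by its set of members F = {A_i | i in J};
  "not all equal" means F has two distinct members (which also forces J non-empty).\<close>
definition anti_closed_arb_union :: "'a set set \<Rightarrow> bool" where
  "anti_closed_arb_union U \<longleftrightarrow>
     (\<forall>F. F \<subseteq> U \<and> (\<exists>A\<in>F. \<exists>B\<in>F. A \<noteq> B) \<longrightarrow> \<Union>F \<notin> U)"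

end

theory Submission
  imports Defs
begin

lemma antichain:
  assumes "anti_closed_arb_union U" "A \<in> U" "B \<in> U" "A \<subseteq> B"
  shows "A = B"
proof (rule ccontr)
  assume "A \<noteq> B"
  hence "\<Union>{A, B} \<notin> U" using assms(1,2,3) unfolding anti_closed_arb_union_def
    by (metis insert_subset empty_subsetI insertI1 insertI2)
  moreover have "\<Union>{A, B} = B" using assms(4) by blast
  ultimately show False using assms(3) by simp
qed

theorem mainTheorem5:
  fixes X :: "'a set" and U :: "'a set set"
  assumes "X \<noteq> {}"
    and "U \<subseteq> Pow X"
    and "anti_closed_arb_union U"
  shows "anti_closed_fin_inter U"
  unfolding anti_closed_fin_inter_def
proof (intro allI impI notI)
  fix n and A :: "nat \<Rightarrow> 'a set"
  assume h: "(\<forall>i\<in>{1..n}. A i \<in> U) \<and> (\<exists>i\<in>{1..n}. \<exists>j\<in>{1..n}. A i \<noteq> A j)"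
    and I: "(\<Inter>i\<in>{1..n}. A i) \<in> U"
  from h obtain i j where ij: "i \<in> {1..n}" "j \<in> {1..n}" "A i \<noteq> A j" by blast
  have si: "(\<Inter>i\<in>{1..n}. A i) \<subseteq> A i" and sj: "(\<Inter>i\<in>{1..n}. A i) \<subseteq> A j"
    using ij by (auto intro: INT_lower)
  have ui: "A i \<in> U" and uj: "A j \<in> U" using h ij by auto
  have "(\<Inter>i\<in>{1..n}. A i) = A i" by (rule antichain[OF assms(3) I ui si])
  moreover have "(\<Inter>i\<in>{1..n}. A i) = A j" by (rule antichain[OF assms(3) I uj sj])
  ultimately show False using ij by simp
qed

end
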